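(* Fix $m\ge 1$, $n\ge 0$, and let $\mathsf{G3Ldm}_{n}^{m}+\mathsf{PR}$ be the calculus $\mathsf{G3Ldm}_{n}^{m}$ extended with the propagation rules $(\mathsf{Pr}_i)$ for all $i\in Ag$ (see context). Then: (i) all sequents of the form $\mathcal{R}, w:\phi, w:\overline{\phi},\Gamma$ are derivable; (ii) substitution of labels is height-preserving admissible; (iii) all inference rules are height-preserving invertible; (iv) the rules $(\mathsf{wk})$: from $\mathcal{R},\Gamma$ infer $\mathcal{R},\mathcal{R}',\Gamma',\Gamma$; $(\mathsf{ctr})_{\mathsf{R}}$: from $\mathcal{R},\mathcal{R}',\mathcal{R}',\Gamma$ infer $\mathcal{R},\mathcal{R}',\Gamma$; and $(\mathsf{ctr})_{\mathsf{F}}$: from $\mathcal{R},\Gamma',\Gamma',\Gamma$ infer $\mathcal{R},\Gamma',\Gamma$ are height-preserving admissible.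
   Context: Language. $Ag=\{1,\dots,m\}$, $Var$ a countable set of propositional variables; formulas $\phi ::= p \mid \overline{p} \mid (\phi\wedge\phi) \mid (\phi\vee\phi) \mid \Box\phi \mid \Diamond\phi \mid [i]\phi \mid \langle i\rangle\phi$. $\overline{\phi}$ is obtained by swapping $p/\overline{p}$, $\wedge/\vee$, $\Box/\Diamond$, $[i]/\langle i\rangle$. Labelled sequents $\mathcal{R},\Gamma$: $\mathcal{R}$ a multiset of relational atoms $\mathcal{R}_ixy$ ($i\in Ag$, $x,y$ labels), $\Gamma$ a multiset of labelled formulas $x:\phi$. Derivations are finite trees whose leaves are $(\mathsf{id})$ instances; height = length of longest branch. Height-preserving admissibility of a rule means: if its premise is derivable with height $\le h$, so is its conclusion. Height-preserving invertibility means: if a conclusion of an instance is derivable with height $\le h$, so is each premise. Substitution admissibility: if $\Lambda$ is derivable with height $\le h$ then so is $\Lambda(y/x)$. Rules of $\mathsf{G3Ldm}_{n}^{m}$ (premise(s) / conclusion): $(\mathsf{id})$: / $\mathcal{R}, w:p, w:\overline{p},\Gamma$. $(\wedge)$: $\mathcal{R}, w:\phi\wedge\psi, w:\phi,\Gamma$ and $\mathcal{R}, w:\phi\wedge\psi, w:\psi,\Gamma$ / $\mathcal{R}, w:\phi\wedge\psi,\Gamma$. $(\vee)$: $\mathcal{R}, w:\phi\vee\psi, w:\phi, w:\psi,\Gamma$ / $\mathcal{R}, w:\phi\vee\psi,\Gamma$. $([i])$: $\mathcal{R},\mathcal{R}_iwv, v:\phi,\Gamma$ / $\mathcal{R}, w:[i]\phi,\Gamma$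 ($v$ fresh). $(\Box)$: $\mathcal{R}, w:\Box\phi, v:\phi,\Gamma$ / $\mathcal{R}, w:\Box\phi,\Gamma$ ($v$ fresh). $(\Diamond)$: $\mathcal{R}, w:\Diamond\phi, u:\phi,\Gamma$ / $\mathcal{R}, w:\Diamond\phi,\Gamma$. $(\mathsf{IOA})$: $\mathcal{R},\mathcal{R}_1u_1v,\dots,\mathcal{R}_mu_mv,\Gamma$ / $\mathcal{R},\Gamma$ ($v$ fresh). $(\langle i\rangle)$: $\mathcal{R},\mathcal{R}_iwu, w:\langle i\rangle\phi, u:\phi,\Gamma$ / $\mathcal{R},\mathcal{R}_iwu, w:\langle i\rangle\phi,\Gamma$. $(\mathsf{refl}_i)$: $\mathcal{R},\mathcal{R}_iww,\Gamma$ / $\mathcal{R},\Gamma$. $(\mathsf{eucl}_i)$: $\mathcal{R},\mathcal{R}_iwu,\mathcal{R}_iwv,\mathcal{R}_iuv,\Gamma$ / $\mathcal{R},\mathcal{R}_iwu,\mathcal{R}_iwv,\Gamma$. $(\mathsf{APC}^i_n)$ (only if $n>0$): premises $\mathcal{R},\mathcal{R}_iw_kw_j,\Gamma$ for all $0\le k\le n-1$, $k+1\le j\le n$ / $\mathcal{R},\Gamma$. "Fresh" means not occurring in the conclusion. One copy of the indexed rules for each $i\in Ag$. Propagation rule $(\mathsf{Pr}_i)$: $\mathcal{R}, w:\langle i\rangle\phi, u:\phi,\Gamma$ / $\mathcal{R}, w:\langle i\rangle\phi,\Gamma$, applicable only if $w=u$ or there are labels $w=z_0,z_1,\dots,z_k=u$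 ($k\ge1$) such that for each $l<k$, $\mathcal{R}_iz_lz_{l+1}\in\mathcal{R}$ or $\mathcal{R}_iz_{l+1}z_l\in\mathcal{R}$. (This is the condition that the propagation automaton of the sequent from $w$ to $u$, whose transitions in both directions are given by the $\mathcal{R}_i$-atoms, accepts a string in the language $\langle i\rangle^*$.) *)

theory Defs
  imports "HOL-Library.Multiset"
begin

text \<open>Formulas in negation normal form. Propositional variables and agents are
natural numbers; the set of agents is Ag = {1..m}.
Atm p = p, NAtm p = overline p, Bx = Box, Dm = Diamond, Ag i = [i], DAg i = <i>.\<close>

datatype fm =
    Atm nat
  | NAtm nat
  | Conj fm fm
  | Disj fm fm
  | Bx fm
  | Dm fm
  | Ag nat fm
  | DAg nat fm

fun neg :: "fm \<Rightarrow> fm" where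
  "neg (Atm p) = NAtm p"
| "neg (NAtm p) = Atm p"
| "neg (Conj a b) = Disj (neg a) (neg b)"
| "neg (Disj a b) = Conj (neg a) (neg b)"
| "neg (Bx a) = Dm (neg a)"
| "neg (Dm a) = Bx (neg a)"
| "neg (Ag i a) = DAg i (neg a)"
| "neg (DAg i a) = Ag i (neg a)"

fun agents :: "fm \<Rightarrow> nat set" where
  "agents (Atm p) = {}"
| "agents (NAtm p) = {}"
| "agents (Conj a b) = agents a \<union> agents b"
| "agents (Disj a b) = agents a \<union> agents b"
| "agents (Bx a) = agents a"
| "agents (Dm a) = agents a"
| "agents (Ag i a) = insert i (agents a)"
| "agents (DAg i a) = insert i (agents a)"

type_synonym lab = nat
text \<open>A relational atom (i, x, y) stands for R_i x y.\<close>
type_synonym ratom = "nat \<times> lab \<times> lab"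
type_synonym lfm = "lab \<times> fm"
type_synonym seq = "ratom multiset \<times> lfm multiset"

definition wf_seq :: "nat \<Rightarrow> seq \<Rightarrow> bool" where
  "wf_seq m S \<longleftrightarrow> (\<forall>(i, x, y) \<in># fst S. i \<in> {1..m}) \<and> (\<forall>(x, \<phi>) \<in># snd S. agents \<phi> \<subseteq> {1..m})"

definition labels :: "seq \<Rightarrow> lab set" where
  "labels S = (\<Union>(i, x, y) \<in> set_mset (fst S). {x, y}) \<union> fst ` set_mset (snd S)"

definition ipath :: "ratom multiset \<Rightarrow> nat \<Rightarrow> lab \<Rightarrow> lab \<Rightarrow> bool" where
  "ipath R i w u \<longleftrightarrow> (\<lambda>x y. (i, x, y) \<in># R \<or> (i, y, x) \<in># R)\<^sup>*\<^sup>* w u"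

inductive g3_rule :: "nat \<Rightarrow> nat \<Rightarrow> seq list \<Rightarrow> seq \<Rightarrow> bool" for m n where
  conjR: "g3_rule m n [(R, add_mset (w, Conj a b) (add_mset (w, a) G)),
                       (R, add_mset (w, Conj a b) (add_mset (w, b) G))]
                      (R, add_mset (w, Conj a b) G)"
| disjR: "g3_rule m n [(R, add_mset (w, Disj a b) (add_mset (w, a) (add_mset (w, b) G)))]
                      (R, add_mset (w, Disj a b) G)"
| agR: "i \<in> {1..m} \<Longrightarrow> v \<notin> labels (R, add_mset (w, Ag i a) G) \<Longrightarrow>
        g3_rule m n [(add_mset (i, w, v) R, add_mset (v, a) G)] (R, add_mset (w, Ag i a) G)"
| boxR: "v \<notin> labels (R, add_mset (w, Bx a) G) \<Longrightarrow>
        g3_rule m n [(R, add_mset (w, Bx a) (add_mset (v, a) G))] (R, add_mset (w, Bx a) G)"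
| diaR: "g3_rule m n [(R, add_mset (w, Dm a) (add_mset (u, a) G))] (R, add_mset (w, Dm a) G)"
| ioa: "v \<notin> labels (R, G) \<Longrightarrow>
        g3_rule m n [(mset (map (\<lambda>i. (i, u i, v)) [1..<Suc m]) + R, G)] (R, G)"
| dagR: "i \<in> {1..m} \<Longrightarrow>
        g3_rule m n [(add_mset (i, w, u) R, add_mset (w, DAg i a) (add_mset (u, a) G))]
                    (add_mset (i, w, u) R, add_mset (w, DAg i a) G)"
| reflR: "i \<in> {1..m} \<Longrightarrow> g3_rule m n [(add_mset (i, w, w) R, G)] (R, G)"
| euclR: "i \<in> {1..m} \<Longrightarrow>
        g3_rule m n [(add_mset (i, w, u) (add_mset (i, w, v) (add_mset (i, u, v) R)), G)]
                    (add_mset (i, w, u) (add_mset (i, w, v) R), G)"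
| apcR: "0 < n \<Longrightarrow> i \<in> {1..m} \<Longrightarrow>
        g3_rule m n [(add_mset (i, ws k, ws j) R, G). k \<leftarrow> [0..<n], j \<leftarrow> [Suc k..<Suc n]] (R, G)"

inductive pr_rule :: "nat \<Rightarrow> seq list \<Rightarrow> seq \<Rightarrow> bool" for m where
  prR: "i \<in> {1..m} \<Longrightarrow> ipath R i w u \<Longrightarrow>
        pr_rule m [(R, add_mset (w, DAg i a) (add_mset (u, a) G))] (R, add_mset (w, DAg i a) G)"

definition rule_PR :: "nat \<Rightarrow> nat \<Rightarrow> seq list \<Rightarrow> seq \<Rightarrow> bool" where
  "rule_PR m n Ps C \<longleftrightarrow> g3_rule m n Ps C \<or> pr_rule m Ps C"

text \<open>deriv m n h S: S is derivable in G3Ldm_n^m + PR with height at most h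
(an (id) leaf has height 0).\<close>
inductive deriv :: "nat \<Rightarrow> nat \<Rightarrow> nat \<Rightarrow> seq \<Rightarrow> bool" for m n where
  idR: "deriv m n h (R, add_mset (w, Atm p) (add_mset (w, NAtm p) G))"
| ruleR: "rule_PR m n Ps C \<Longrightarrow> (\<forall>P \<in> set Ps. deriv m n h P) \<Longrightarrow> deriv m n (Suc h) C"

definition lsub :: "lab \<Rightarrow> lab \<Rightarrow> lab \<Rightarrow> lab" where
  "lsub y x z = (if z = x then y else z)"

text \<open>subst_seq y x S = S(y/x).\<close>
definition subst_seq :: "lab \<Rightarrow> lab \<Rightarrow> seq \<Rightarrow> seq" where
  "subst_seq y x S =
    (image_mset (\<lambda>(i, a, b). (i, lsub y x a, lsub y x b)) (fst S),
     image_mset (\<lambda>(a, \<phi>). (lsub y x a, \<phi>)) (snd S))"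

end

theory Submission
  imports Defs
begin


definition mapR :: "(lab \<Rightarrow> lab) \<Rightarrow> ratom multiset \<Rightarrow> ratom multiset" where
  "mapR f R = image_mset (\<lambda>(i, a, b). (i, f a, f b)) R"
definition mapG :: "(lab \<Rightarrow> lab) \<Rightarrow> lfm multiset \<Rightarrow> lfm multiset" where
  "mapG f G = image_mset (\<lambda>(a, \<phi>). (f a, \<phi>)) G"

lemma mapR_simps[simp]:
  "mapR f {#} = {#}"
  "mapR f (add_mset (i,a,b) R) = add_mset (i, f a, f b) (mapR f R)"
  "mapR f (R + R') = mapR f R + mapR f R'"
  by (auto simp: mapR_def)

lemma mapR_mset[simp]: "mapR f (mset (map (\<lambda>i. (i, u i, v)) xs)) = mset (map (\<lambda>i. (i, f (u i), f v)) xs)"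
  by (induction xs) (auto simp: mapR_def)

lemma mapG_simps[simp]:
  "mapG f {#} = {#}"
  "mapG f (add_mset (a,\<phi>) G) = add_mset (f a, \<phi>) (mapG f G)"
  "mapG f (G + G') = mapG f G + mapG f G'"
  by (auto simp: mapG_def)

lemma labels_simps[simp]:
  "labels ({#}, {#}) = {}"
  "labels (add_mset (i,a,b) R, G) = insert a (insert b (labels (R, G)))"
  "labels (R, add_mset (a,\<phi>) G) = insert a (labels (R, G))"
  "labels (R + R', G + G') = labels (R, G) \<union> labels (R', G')"
  "labels (R, G + G') = labels (R, G) \<union> labels ({#}, G')"
  "labels (R + R', G) = labels (R, G) \<union> labels (R', {#})"
  by (auto simp: labels_def)

lemma labels_mset[simp]: "labels (mset (map (\<lambda>i. (i, u i, v)) xs) + R, G) =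
   (if xs = [] then {} else insert v (u ` set xs)) \<union> labels (R, G)"
  by (auto simp: labels_def)

lemma finite_labels[simp]: "finite (labels S)"
  by (auto simp: labels_def)

lemma mapR_id_on: "(\<forall>x \<in> labels (R, {#}). f x = x) \<Longrightarrow> mapR f R = R"
  unfolding mapR_def labels_def
  by (induction R) auto

lemma mapG_id_on: "(\<forall>x \<in> labels ({#}, G). f x = x) \<Longrightarrow> mapG f G = G"
  unfolding mapG_def labels_def
  by (induction G) auto

lemma mapR_cong: "(\<forall>x \<in> labels (R, {#}). f x = g x) \<Longrightarrow> mapR f R = mapR g R"
  unfolding mapR_def labels_def
  by (induction R) auto

lemma mapG_cong: "(\<forall>x \<in> labels ({#}, G). f x = g x) \<Longrightarrow> mapG f G = mapG g G"
  unfolding mapG_def labels_def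
  by (induction G) auto

lemma labels_map: "labels (mapR f R, mapG f G) = f ` labels (R, G)"
  unfolding labels_def mapR_def mapG_def by force

lemma deriv_mono: "deriv m n h S \<Longrightarrow> h \<le> h' \<Longrightarrow> deriv m n h' S"
proof (induction h S arbitrary: h' rule: deriv.induct)
  case (idR h R w p G)
  then show ?case using deriv.idR by blast
next
  case (ruleR Ps C h)
  then obtain k where "h' = Suc k" "h \<le> k" by (cases h') auto
  then show ?case using ruleR by (auto intro!: deriv.ruleR)
qed

lemma ipath_mono: "ipath R i w u \<Longrightarrow> set_mset R \<subseteq> set_mset R' \<Longrightarrow> ipath R' i w u"
  unfolding ipath_def
  by (erule rtranclp_mono[THEN predicate2D, rotated]) auto

lemma ipath_map: "ipath R i w u \<Longrightarrow> ipath (mapR f R + R') i (f w) (f u)"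
  unfolding ipath_def
proof (induction rule: rtranclp_induct)
  case base then show ?case by simp
next
  case (step y z)
  then have "(i, f y, f z) \<in># mapR f R \<or> (i, f z, f y) \<in># mapR f R"
    unfolding mapR_def by force
  then show ?case using step
    by (metis (mono_tags, lifting) rtranclp.rtrancl_into_rtrancl union_iff)
qed

lemma ipath_labels: "ipath R i w u \<Longrightarrow> w \<noteq> u \<Longrightarrow> u \<in> labels (R, {#})"
  unfolding ipath_def
  by (induction rule: rtranclp_induct) (auto simp: labels_def)



definition agprin :: "nat \<Rightarrow> seq list \<Rightarrow> ratom multiset \<Rightarrow> lfm multiset \<Rightarrow> lfm \<Rightarrow> bool" where
 "agprin m Ps R G x \<longleftrightarrow> (\<exists>i w a v. x = (w, Ag i a) \<and> i \<in> {1..m} \<and> Ps = [(add_mset (i,w,v) R, add_mset (v,a) G)]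
     \<and> v \<notin> labels (R, add_mset x G))"

definition euclsp :: "nat \<Rightarrow> seq list \<Rightarrow> ratom multiset \<Rightarrow> lfm multiset \<Rightarrow> ratom \<Rightarrow> bool" where
 "euclsp m Ps R G r \<longleftrightarrow> (\<exists>i w u R1. r = (i,w,u) \<and> R = add_mset r R1 \<and> r \<notin># R1 \<and> i \<in> {1..m} \<and>
     Ps = [(add_mset r (add_mset r (add_mset (i,u,u) R1)), G)])"

definition isAg :: "lfm \<Rightarrow> bool" where "isAg x \<longleftrightarrow> (\<exists>w i a. x = (w, Ag i a))"

definition del_ok :: "nat \<Rightarrow> seq list \<Rightarrow> ratom multiset \<Rightarrow> lfm multiset \<Rightarrow> ratom multiset \<Rightarrow> lfm multiset \<Rightarrow> bool" where
 "del_ok m Ps R G Dr Dg \<longleftrightarrow> (Dr = {#} \<and> Dg = {#})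
   \<or> (Dr = {#} \<and> (\<exists>x. Dg = {#x#} \<and> (x \<in># G \<or> isAg x) \<and> \<not> agprin m Ps R G x))
   \<or> (Dg = {#} \<and> (\<exists>r. Dr = {#r#} \<and> r \<in># R \<and> \<not> euclsp m Ps R G r))"

lemma hG: "G + Dg = add_mset y G0 \<Longrightarrow> (Dg = {#} \<or> (\<exists>x. Dg = {#x#} \<and> (x \<in># G \<or> x \<noteq> y))) \<Longrightarrow>
   \<exists>G1. G0 = G1 + Dg \<and> G = add_mset y G1"
proof (elim disjE exE conjE)
  assume "G + Dg = add_mset y G0" "Dg = {#}" then show ?thesis by auto
next
  fix x assume a: "G + Dg = add_mset y G0" "Dg = {#x#}" "x \<in># G"
  then obtain G2 where G2: "G = add_mset x G2" by (metis multi_member_split)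
  show ?thesis
  proof (cases "x = y")
    case True then show ?thesis using a G2 by auto
  next
    case False
    have "x \<in># add_mset y G0" using a(1,2) by (metis union_iff multi_member_last)
    then have "x \<in># G0" using False by simp
    then obtain G1 where "G0 = add_mset x G1" by (metis multi_member_split)
    then show ?thesis using a by (simp add: add_mset_commute)
  qed
next
  fix x assume a: "G + Dg = add_mset y G0" "Dg = {#x#}" "x \<noteq> y"
  have "x \<in># add_mset y G0" using a(1,2) by (metis union_iff multi_member_last)
  then have "x \<in># G0" using a(3) by simp
  then obtain G1 where "G0 = add_mset x G1" by (metis multi_member_split)
  then show ?thesis using a by (simp add: add_mset_commute)
qed

lemma hR: "R + Dr = add_mset y R0 \<Longrightarrow> (Dr = {#} \<or> (\<exists>r. Dr = {#r#} \<and> r \<in># R)) \<Longrightarrow>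
   \<exists>R1. R0 = R1 + Dr \<and> R = add_mset y R1"
  using hG[of R Dr y R0] by blast

lemma hR2: "R + Dr = add_mset a (add_mset b R0) \<Longrightarrow>
   (Dr = {#} \<or> (\<exists>r. Dr = {#r#} \<and> r \<in># R \<and> \<not> (r = a \<and> r = b \<and> r \<notin># R0))) \<Longrightarrow>
   \<exists>R1. R0 = R1 + Dr \<and> R = add_mset a (add_mset b R1)"
proof (elim disjE exE conjE)
  assume "R + Dr = add_mset a (add_mset b R0)" "Dr = {#}" then show ?thesis by auto
next
  fix r assume h: "R + Dr = add_mset a (add_mset b R0)" "Dr = {#r#}" "r \<in># R"
    "\<not> (r = a \<and> r = b \<and> r \<notin># R0)"
  have "count R r \<ge> 1" using h(3) by (simp add: Suc_le_eq)
  then have c: "count (add_mset a (add_mset b R0)) r \<ge> 2"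
    unfolding h(1)[symmetric] using h(2) by simp
  have "r \<in># R0"
  proof (rule ccontr)
    assume "r \<notin># R0"
    then have "count (add_mset a (add_mset b R0)) r = (if r = a then 1 else 0) + (if r = b then 1 else 0)"
      using \<open>r \<notin># R0\<close> by (auto simp: not_in_iff)
    then show False using c h(4) \<open>r \<notin># R0\<close> by (auto split: if_splits)
  qed
  then obtain R1 where "R0 = add_mset r R1" by (metis multi_member_split)
  then show ?thesis using h by (simp add: add_mset_commute)
qed



lemma rule_gen:
  assumes m1: "1 \<le> m"
  and r: "rule_PR m n Ps (R + Dr, G + Dg)"
  and dok: "del_ok m Ps R G Dr Dg"
  and fr: "\<forall>P\<in>set Ps. \<forall>x\<in>labels P - labels (R + Dr, G + Dg). g x \<notin> labels (mapR g R + Re, mapG g G + Ge)"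
  shows "\<exists>Ps0. Ps = map (\<lambda>P. (fst P + Dr, snd P + Dg)) Ps0 \<and>
     rule_PR m n (map (\<lambda>P. (mapR g (fst P) + Re, mapG g (snd P) + Ge)) Ps0) (mapR g R + Re, mapG g G + Ge)"
proof -
  have dr: "Dr = {#} \<or> (\<exists>r. Dr = {#r#} \<and> r \<in># R)" using dok by (auto simp: del_ok_def)
  have dg: "Dg = {#} \<or> (\<exists>x. Dg = {#x#} \<and> (x \<in># G \<or> isAg x))" using dok by (auto simp: del_ok_def)
  have dgy: "Dg = {#} \<or> (\<exists>x. Dg = {#x#} \<and> (x \<in># G \<or> x \<noteq> y))" if "\<not> isAg y" for y
    using dg that by auto
  have dR0: "\<exists>R1. R0 = R1 + Dr \<and> R = R1" if "R + Dr = R0" for R0 using that by auto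
  have dG0: "\<exists>G1. G0 = G1 + Dg \<and> G = G1" if "G + Dg = G0" for G0 using that by auto
  from r[unfolded rule_PR_def] show ?thesis
  proof (elim disjE)
    assume "g3_rule m n Ps (R + Dr, G + Dg)"
    then show ?thesis
    proof cases
      case (conjR w a b G0)
      obtain G1 where G1: "G0 = G1 + Dg" "G = add_mset (w, Conj a b) G1"
        using hG[of G Dg "(w, Conj a b)" G0] conjR dgy[of "(w, Conj a b)"] by (auto simp: isAg_def)
      show ?thesis
        apply (rule exI[of _ "[(R, add_mset (w, Conj a b) (add_mset (w, a) G1)), (R, add_mset (w, Conj a b) (add_mset (w, b) G1))]"])
        using g3_rule.conjR[of m n "mapR g R + Re" "g w" a b "mapG g G1 + Ge"] conjR G1
        by (auto simp: rule_PR_def)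
    next
      case (disjR w a b G0)
      obtain G1 where G1: "G0 = G1 + Dg" "G = add_mset (w, Disj a b) G1"
        using hG[of G Dg "(w, Disj a b)" G0] disjR dgy[of "(w, Disj a b)"] by (auto simp: isAg_def)
      show ?thesis
        apply (rule exI[of _ "[(R, add_mset (w, Disj a b) (add_mset (w, a) (add_mset (w, b) G1)))]"])
        using g3_rule.disjR[of m n "mapR g R + Re" "g w" a b "mapG g G1 + Ge"] disjR G1
        by (auto simp: rule_PR_def)
    next
      case (agR i v w a G0)
      have ny: "Dg = {#} \<or> (\<exists>x. Dg = {#x#} \<and> (x \<in># G \<or> x \<noteq> (w, Ag i a)))"
      proof (cases "Dg = {#}")
        case False
        then obtain x where x: "Dg = {#x#}" "\<not> agprin m Ps R G x" using dok by (auto simp: del_ok_def)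
        have "x \<noteq> (w, Ag i a)"
        proof
          assume xe: "x = (w, Ag i a)"
          have "Dr = {#}" using dok False by (auto simp: del_ok_def)
          then have "agprin m Ps R G x" using agR x xe unfolding agprin_def by auto
          then show False using x by simp
        qed
        then show ?thesis using x by auto
      qed simp
      obtain G1 where G1: "G0 = G1 + Dg" "G = add_mset (w, Ag i a) G1"
        using hG[of G Dg "(w, Ag i a)" G0] agR ny by auto
      have fv: "g v \<notin> labels (mapR g R + Re, add_mset (g w, Ag i a) (mapG g G1 + Ge))"
        using fr agR G1 by auto
      show ?thesis
        apply (rule exI[of _ "[(add_mset (i,w,v) R, add_mset (v, a) G1)]"])
        using g3_rule.agR[of i m "g v" "mapR g R + Re" "g w" a "mapG g G1 + Ge" n, OF _ fv] agR G1
        by (auto simp: rule_PR_def)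
    next
      case (boxR v w a G0)
      obtain G1 where G1: "G0 = G1 + Dg" "G = add_mset (w, Bx a) G1"
        using hG[of G Dg "(w, Bx a)" G0] boxR dgy[of "(w, Bx a)"] by (auto simp: isAg_def)
      have fv: "g v \<notin> labels (mapR g R + Re, add_mset (g w, Bx a) (mapG g G1 + Ge))"
        using fr boxR G1 by auto
      show ?thesis
        apply (rule exI[of _ "[(R, add_mset (w, Bx a) (add_mset (v, a) G1))]"])
        using g3_rule.boxR[of "g v" "mapR g R + Re" "g w" a "mapG g G1 + Ge" m n, OF fv] boxR G1
        by (auto simp: rule_PR_def)
    next
      case (diaR w a u G0)
      obtain G1 where G1: "G0 = G1 + Dg" "G = add_mset (w, Dm a) G1"
        using hG[of G Dg "(w, Dm a)" G0] diaR dgy[of "(w, Dm a)"] by (auto simp: isAg_def)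
      show ?thesis
        apply (rule exI[of _ "[(R, add_mset (w, Dm a) (add_mset (u, a) G1))]"])
        using g3_rule.diaR[of m n "mapR g R + Re" "g w" a "g u" "mapG g G1 + Ge"] diaR G1
        by (auto simp: rule_PR_def)
    next
      case (ioa v u)
      have fv: "g v \<notin> labels (mapR g R + Re, mapG g G + Ge)"
        using fr ioa m1 by auto
      have eq: "map (\<lambda>P. (mapR g (fst P) + Re, mapG g (snd P) + Ge)) [(mset (map (\<lambda>i. (i, u i, v)) [1..<Suc m]) + R, G)]
         = [(mset (map (\<lambda>i. (i, (g \<circ> u) i, g v)) [1..<Suc m]) + (mapR g R + Re), mapG g G + Ge)]"
        by (simp only: list.map fst_conv snd_conv mapR_simps(3) mapR_mset add.assoc comp_def)
      show ?thesis
        apply (rule exI[of _ "[(mset (map (\<lambda>i. (i, u i, v)) [1..<Suc m]) + R, G)]"], rule conjI)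
         using ioa apply (simp add: add.assoc)
        apply (subst eq)
        unfolding rule_PR_def apply (rule disjI1)
        using fv by (rule g3_rule.ioa)
    next
      case (dagR i w u R0 a G0)
      obtain G1 where G1: "G0 = G1 + Dg" "G = add_mset (w, DAg i a) G1"
        using hG[of G Dg "(w, DAg i a)" G0] dagR dgy[of "(w, DAg i a)"] by (auto simp: isAg_def)
      obtain R1 where R1: "R0 = R1 + Dr" "R = add_mset (i, w, u) R1"
        using hR[of R Dr "(i, w, u)" R0] dagR dr by auto
      show ?thesis
        apply (rule exI[of _ "[(add_mset (i, w, u) R1, add_mset (w, DAg i a) (add_mset (u, a) G1))]"])
        using g3_rule.dagR[of i m n "g w" "g u" "mapR g R1 + Re" a "mapG g G1 + Ge"] dagR G1 R1
        by (auto simp: rule_PR_def)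
    next
      case (reflR i w)
      show ?thesis
        apply (rule exI[of _ "[(add_mset (i, w, w) R, G)]"])
        using g3_rule.reflR[of i m n "g w" "mapR g R + Re" "mapG g G + Ge"] reflR
        by (auto simp: rule_PR_def)
    next
      case (euclR i w u v R0)
      have nsp: "Dr = {#} \<or> (\<exists>r. Dr = {#r#} \<and> r \<in># R \<and> \<not> (r = (i,w,u) \<and> r = (i,w,v) \<and> r \<notin># R0))"
      proof (cases "Dr = {#}")
        case False
        then obtain r where x: "Dr = {#r#}" "r \<in># R" "\<not> euclsp m Ps R G r" using dok by (auto simp: del_ok_def)
        have "\<not> (r = (i,w,u) \<and> r = (i,w,v) \<and> r \<notin># R0)"
        proof
          assume xe: "r = (i,w,u) \<and> r = (i,w,v) \<and> r \<notin># R0"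
          have "Dg = {#}" using dok False by (auto simp: del_ok_def)
          then have "euclsp m Ps R G r" using euclR x xe unfolding euclsp_def by auto
          then show False using x by simp
        qed
        then show ?thesis using x by auto
      qed simp
      obtain R1 where R1: "R0 = R1 + Dr" "R = add_mset (i, w, u) (add_mset (i, w, v) R1)"
        using hR2[of R Dr "(i, w, u)" "(i, w, v)" R0] euclR nsp by auto
      show ?thesis
        apply (rule exI[of _ "[(add_mset (i, w, u) (add_mset (i, w, v) (add_mset (i, u, v) R1)), G)]"])
        using g3_rule.euclR[of i m n "g w" "g u" "g v" "mapR g R1 + Re" "mapG g G + Ge"] euclR R1
        by (auto simp: rule_PR_def)
    next
      case (apcR i ws)
      show ?thesis
        apply (rule exI[of _ "[(add_mset (i, ws k, ws j) R, G). k \<leftarrow> [0..<n], j \<leftarrow> [Suc k..<Suc n]]"])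
        using g3_rule.apcR[of n i m "g \<circ> ws" "mapR g R + Re" "mapG g G + Ge"] apcR
        by (auto simp: rule_PR_def map_concat comp_def)
    qed
  next
    assume "pr_rule m Ps (R + Dr, G + Dg)"
    then show ?thesis
    proof cases
      case (prR i w u a G0)
      obtain G1 where G1: "G0 = G1 + Dg" "G = add_mset (w, DAg i a) G1"
        using hG[of G Dg "(w, DAg i a)" G0] prR dgy[of "(w, DAg i a)"] by (auto simp: isAg_def)
      have "set_mset (R + Dr) \<subseteq> set_mset R" using dr by auto
      then have "ipath R i w u" using prR ipath_mono by auto
      then have ip: "ipath (mapR g R + Re) i (g w) (g u)" by (rule ipath_map)
      show ?thesis
        apply (rule exI[of _ "[(R, add_mset (w, DAg i a) (add_mset (u, a) G1))]"])
        using pr_rule.prR[of i m "mapR g R + Re" "g w" "g u" a "mapG g G1 + Ge", OF _ ip] prR G1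
        by (auto simp: rule_PR_def)
    qed
  qed
qed



lemma labels_sub: "labels (R, {#}) \<subseteq> labels (R, G)" "labels ({#}, G) \<subseteq> labels (R, G)"
  by (auto simp: labels_def)

lemma bound_nat: "finite (A::nat set) \<Longrightarrow> \<forall>x\<in>A. x < Suc (Max (insert 0 A))"
  by (simp add: le_imp_less_Suc)

lemma deriv_map:
  assumes m1: "1 \<le> m"
  shows "deriv m n h S \<Longrightarrow> deriv m n h (mapR f (fst S) + Re, mapG f (snd S) + Ge)"
proof (induction h S arbitrary: f Re Ge rule: deriv.induct)
  case (idR h R w p G)
  then show ?case using deriv.idR by simp
next
  case (ruleR Ps C h)
  obtain R G where C: "C = (R, G)" by (cases C)
  define K where "K = Suc (Max (insert 0 (labels (mapR f R + Re, mapG f G + Ge))))"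
  have K: "\<forall>x\<in>labels (mapR f R + Re, mapG f G + Ge). x < K"
    unfolding K_def by (rule bound_nat) simp
  define g where "g x = (if x \<in> labels (R, G) then f x else x + K)" for x
  have gR: "mapR g R = mapR f R" using labels_sub(1)[of R G]
    by (intro mapR_cong) (auto simp: g_def)
  have gG: "mapG g G = mapG f G" using labels_sub(2)[of G R]
    by (intro mapG_cong) (auto simp: g_def)
  have fr: "\<forall>P\<in>set Ps. \<forall>x\<in>labels P - labels (R + {#}, G + {#}). g x \<notin> labels (mapR g R + Re, mapG g G + Ge)"
    using K unfolding gR gG by (auto simp: g_def)
  have dok: "del_ok m Ps R G {#} {#}" by (simp add: del_ok_def)
  have "rule_PR m n Ps (R + {#}, G + {#})" using ruleR C by simp
  from rule_gen[OF m1 this dok fr]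
  obtain Ps0 where Ps0: "Ps = map (\<lambda>P. (fst P + {#}, snd P + {#})) Ps0"
    "rule_PR m n (map (\<lambda>P. (mapR g (fst P) + Re, mapG g (snd P) + Ge)) Ps0) (mapR g R + Re, mapG g G + Ge)"
    by blast
  have "Ps0 = Ps" using Ps0(1) by (simp add: map_idI)
  then have "\<forall>P\<in>set (map (\<lambda>P. (mapR g (fst P) + Re, mapG g (snd P) + Ge)) Ps0). deriv m n h P"
    using ruleR.IH by auto
  from deriv.ruleR[OF Ps0(2) this] show ?case unfolding C gR gG by simp
qed

lemma mapR_id[simp]: "mapR id R = R" by (simp add: mapR_id_on)
lemma mapG_id[simp]: "mapG id G = G" by (simp add: mapG_id_on)

lemma deriv_wk:
  assumes "1 \<le> m" "deriv m n h (R, G)"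
  shows "deriv m n h (R + Re, G + Ge)"
  using deriv_map[OF assms, of id Re Ge] by simp



lemma idR_gen: "(w, Atm p) \<in># G \<Longrightarrow> (w, NAtm p) \<in># G \<Longrightarrow> deriv m n h (R, G)"
proof -
  assume a: "(w, Atm p) \<in># G" "(w, NAtm p) \<in># G"
  then obtain G1 where G1: "G = add_mset (w, Atm p) G1" by (metis multi_member_split)
  then have "(w, NAtm p) \<in># G1" using a by auto
  then obtain G2 where "G1 = add_mset (w, NAtm p) G2" by (metis multi_member_split)
  then show ?thesis using G1 deriv.idR by blast
qed

lemma deriv_cases:
  assumes "deriv m n h C"
  shows "(\<exists>w p. (w, Atm p) \<in># snd C \<and> (w, NAtm p) \<in># snd C) \<or>
         (\<exists>h' Ps. h = Suc h' \<and> rule_PR m n Ps C \<and> (\<forall>P\<in>set Ps. deriv m n h' P))"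
  using assms by cases auto

lemma rename_inst:
  assumes m1: "1 \<le> m" and r: "rule_PR m n Ps (R, G)" and d: "\<forall>P\<in>set Ps. deriv m n h P"
    and fA: "finite A"
  shows "\<exists>Ps'. rule_PR m n Ps' (R, G) \<and> (\<forall>P\<in>set Ps'. deriv m n h P \<and> labels P \<inter> A \<subseteq> labels (R, G))"
proof -
  define K where "K = Suc (Max (insert 0 (A \<union> labels (R, G))))"
  have K: "\<forall>x\<in>A \<union> labels (R, G). x < K"
    unfolding K_def by (rule bound_nat) (simp add: fA)
  define g where "g x = (if x \<in> labels (R, G) then x else x + K)" for x
  have gR: "mapR g R = R" using labels_sub(1)[of R G]
    by (intro mapR_id_on) (auto simp: g_def)
  have gG: "mapG g G = G" using labels_sub(2)[of G R]
    by (intro mapG_id_on) (auto simp: g_def)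
  have fr: "\<forall>P\<in>set Ps. \<forall>x\<in>labels P - labels (R + {#}, G + {#}). g x \<notin> labels (mapR g R + {#}, mapG g G + {#})"
    using K unfolding gR gG by (auto simp: g_def)
  have dok: "del_ok m Ps R G {#} {#}" by (simp add: del_ok_def)
  have "rule_PR m n Ps (R + {#}, G + {#})" using r by simp
  from rule_gen[OF m1 this dok fr]
  obtain Ps0 where Ps0: "Ps = map (\<lambda>P. (fst P + {#}, snd P + {#})) Ps0"
    "rule_PR m n (map (\<lambda>P. (mapR g (fst P) + {#}, mapG g (snd P) + {#})) Ps0) (mapR g R + {#}, mapG g G + {#})"
    by blast
  have "Ps0 = Ps" using Ps0(1) by (simp add: map_idI)
  show ?thesis
  proof (intro exI conjI)
    show "rule_PR m n (map (\<lambda>P. (mapR g (fst P) + {#}, mapG g (snd P) + {#})) Ps0) (R, G)"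
      using Ps0(2) gR gG by simp
    show "\<forall>P\<in>set (map (\<lambda>P. (mapR g (fst P) + {#}, mapG g (snd P) + {#})) Ps0). deriv m n h P \<and> labels P \<inter> A \<subseteq> labels (R, G)"
    proof
      fix P assume "P \<in> set (map (\<lambda>P. (mapR g (fst P) + {#}, mapG g (snd P) + {#})) Ps0)"
      then obtain Q where Q: "Q \<in> set Ps" "P = (mapR g (fst Q) + {#}, mapG g (snd Q) + {#})"
        using \<open>Ps0 = Ps\<close> by auto
      have "deriv m n h P" using deriv_map[OF m1, of n h Q g "{#}" "{#}"] d Q by auto
      moreover have "labels P = g ` labels Q" using Q labels_map[of g "fst Q" "snd Q"] by simp
      then have "labels P \<inter> A \<subseteq> labels (R, G)" using K by (auto simp: g_def)
      ultimately show "deriv m n h P \<and> labels P \<inter> A \<subseteq> labels (R, G)" by simp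
    qed
  qed
qed

lemma ag_inv:
  assumes m1: "1 \<le> m"
  shows "deriv m n h (R, add_mset (w, Ag i a) G) \<Longrightarrow> v \<notin> labels (R, add_mset (w, Ag i a) G) \<Longrightarrow>
    deriv m n h (add_mset (i, w, v) R, add_mset (v, a) G)"
proof (induction h arbitrary: R G v rule: less_induct)
  case (less h)
  let ?x = "(w, Ag i a)"
  from deriv_cases[OF less.prems(1)] show ?case
  proof (elim disjE exE conjE)
    fix w' p assume "(w', Atm p) \<in># snd (R, add_mset ?x G)" "(w', NAtm p) \<in># snd (R, add_mset ?x G)"
    then show ?thesis by (intro idR_gen[of w' p]) auto
  next
    fix h' Ps assume h: "h = Suc h'" "rule_PR m n Ps (R, add_mset ?x G)" "\<forall>P\<in>set Ps. deriv m n h' P"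
    obtain Ps' where Ps': "rule_PR m n Ps' (R, add_mset ?x G)"
      "\<forall>P\<in>set Ps'. deriv m n h' P \<and> labels P \<inter> {v} \<subseteq> labels (R, add_mset ?x G)"
      using rename_inst[OF m1 h(2,3), of "{v}"] by auto
    have vP: "\<forall>P\<in>set Ps'. v \<notin> labels P" using Ps'(2) less.prems(2) by auto
    show ?thesis
    proof (cases "agprin m Ps' R G ?x")
      case True
      then obtain v0 where v0: "Ps' = [(add_mset (i,w,v0) R, add_mset (v0,a) G)]"
        "v0 \<notin> labels (R, add_mset ?x G)"
        unfolding agprin_def by auto
      have d: "deriv m n h' (add_mset (i,w,v0) R, add_mset (v0,a) G)" using Ps'(2) v0 by auto
      define f where "f = id(v0 := v)"
      have fR: "mapR f R = R" using v0(2) labels_sub(1)[of R "add_mset ?x G"]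
        by (intro mapR_id_on) (auto simp: f_def)
      have fG: "mapG f G = G" using v0(2) labels_sub(2)[of "add_mset ?x G" R]
        by (intro mapG_id_on) (auto simp: f_def)
      have "w \<noteq> v0" using v0(2) by auto
      then have "deriv m n h' (add_mset (i, w, v) R, add_mset (v, a) G)"
        using deriv_map[OF m1 d, of f "{#}" "{#}"] fR fG by (simp add: f_def)
      then show ?thesis using h(1) deriv_mono by (metis le_SucI order_refl)
    next
      case False
      have dok: "del_ok m Ps' R G {#} {#?x#}" using False by (auto simp: del_ok_def isAg_def)
      have fr: "\<forall>P\<in>set Ps'. \<forall>y\<in>labels P - labels (R + {#}, G + {#?x#}).
           id y \<notin> labels (mapR id R + {#(i,w,v)#}, mapG id G + {#(v,a)#})"
        using vP by (auto simp: labels_def)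
      have "rule_PR m n Ps' (R + {#}, G + {#?x#})" using Ps'(1) by simp
      from rule_gen[OF m1 this dok fr]
      obtain Ps0 where Ps0: "Ps' = map (\<lambda>P. (fst P + {#}, snd P + {#?x#})) Ps0"
        "rule_PR m n (map (\<lambda>P. (mapR id (fst P) + {#(i,w,v)#}, mapG id (snd P) + {#(v,a)#})) Ps0)
            (mapR id R + {#(i,w,v)#}, mapG id G + {#(v,a)#})"
        by blast
      have "\<forall>P\<in>set (map (\<lambda>P. (mapR id (fst P) + {#(i,w,v)#}, mapG id (snd P) + {#(v,a)#})) Ps0). deriv m n h' P"
      proof
        fix P assume "P \<in> set (map (\<lambda>P. (mapR id (fst P) + {#(i,w,v)#}, mapG id (snd P) + {#(v,a)#})) Ps0)"
        then obtain Q where Q: "Q \<in> set Ps0" "P = (add_mset (i,w,v) (fst Q), add_mset (v,a) (snd Q))" by auto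
        have "(fst Q, add_mset ?x (snd Q)) \<in> set Ps'" using Q(1) Ps0(1) by auto
        then have "deriv m n h' (fst Q, add_mset ?x (snd Q))" "v \<notin> labels (fst Q, add_mset ?x (snd Q))"
          using Ps'(2) vP by auto
        then show "deriv m n h' P" using less.IH[of h'] h(1) Q(2) by auto
      qed
      from deriv.ruleR[OF Ps0(2) this] show ?thesis using h(1) by simp
    qed
  qed
qed



lemma persist:
  assumes "rule_PR m n Ps C" "P \<in> set Ps"
  shows "fst C \<subseteq># fst P \<and> ((\<exists>i w a v G0. snd C = add_mset (w, Ag i a) G0 \<and> i \<in> {1..m} \<and>
      Ps = [(add_mset (i,w,v) (fst C), add_mset (v,a) G0)] \<and> v \<notin> labels C) \<or> snd C \<subseteq># snd P)"
  using assms unfolding rule_PR_def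
proof (elim disjE)
  assume "g3_rule m n Ps C" then show ?thesis using assms(2)
    by cases (auto simp: subset_mset.add_increasing2 subset_mset.le_add_same_cancel2)
next
  assume "pr_rule m Ps C" then show ?thesis using assms(2) by cases auto
qed

lemma ctrR1:
  assumes m1: "1 \<le> m"
  shows "deriv m n h (add_mset r (add_mset r R), G) \<Longrightarrow> deriv m n h (add_mset r R, G)"
proof (induction h arbitrary: R G r rule: less_induct)
  case (less h)
  from deriv_cases[OF less.prems(1)] show ?case
  proof (elim disjE exE conjE)
    fix w' p assume "(w', Atm p) \<in># snd (add_mset r (add_mset r R), G)"
      "(w', NAtm p) \<in># snd (add_mset r (add_mset r R), G)"
    then show ?thesis by (intro idR_gen[of w' p]) auto
  next
    fix h' Ps assume h: "h = Suc h'" "rule_PR m n Ps (add_mset r (add_mset r R), G)" "\<forall>P\<in>set Ps. deriv m n h' P"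
    show ?thesis
    proof (cases "euclsp m Ps (add_mset r R) G r")
      case True
      then obtain i w u where e: "r = (i,w,u)" "i \<in> {1..m}"
        "Ps = [(add_mset r (add_mset r (add_mset (i,u,u) R)), G)]"
        unfolding euclsp_def by auto
      then have "deriv m n h' (add_mset r (add_mset r (add_mset (i,u,u) R)), G)" using h by auto
      then have "deriv m n h' (add_mset r (add_mset (i,u,u) R), G)" using less.IH[of h'] h(1) by auto
      then have d: "deriv m n h' (add_mset (i,u,u) (add_mset r R), G)" by (simp add: add_mset_commute)
      have "rule_PR m n [(add_mset (i,u,u) (add_mset r R), G)] (add_mset r R, G)"
        unfolding rule_PR_def using g3_rule.reflR[OF e(2), of n u "add_mset r R" G] by simp
      from deriv.ruleR[OF this] d show ?thesis using h(1) by simp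
    next
      case False
      have dok: "del_ok m Ps (add_mset r R) G {#r#} {#}" using False by (simp add: del_ok_def)
      have fr: "\<forall>P\<in>set Ps. \<forall>y\<in>labels P - labels (add_mset r R + {#r#}, G + {#}).
           id y \<notin> labels (mapR id (add_mset r R) + {#}, mapG id G + {#})"
        by (auto simp: labels_def)
      have "rule_PR m n Ps (add_mset r R + {#r#}, G + {#})" using h(2) by simp
      from rule_gen[OF m1 this dok fr]
      obtain Ps0 where Ps0: "Ps = map (\<lambda>P. (fst P + {#r#}, snd P + {#})) Ps0"
        "rule_PR m n (map (\<lambda>P. (mapR id (fst P) + {#}, mapG id (snd P) + {#})) Ps0)
            (mapR id (add_mset r R) + {#}, mapG id G + {#})"
        by blast
      have "\<forall>P\<in>set (map (\<lambda>P. (mapR id (fst P) + {#}, mapG id (snd P) + {#})) Ps0). deriv m n h' P"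
      proof
        fix P assume "P \<in> set (map (\<lambda>P. (mapR id (fst P) + {#}, mapG id (snd P) + {#})) Ps0)"
        then obtain Q where Q: "Q \<in> set Ps0" "P = Q" by auto
        have QP: "(add_mset r (fst Q), snd Q) \<in> set Ps" using Q(1) Ps0(1) by auto
        then have "add_mset r (add_mset r R) \<subseteq># add_mset r (fst Q)"
          using persist[OF h(2) QP] by simp
        then have "add_mset r R \<subseteq># fst Q" by simp
        then have "r \<in># fst Q" using mset_subset_eqD by fastforce
        then obtain R2 where R2: "fst Q = add_mset r R2" by (metis multi_member_split)
        have "deriv m n h' (add_mset r (fst Q), snd Q)" using QP h(3) by auto
        then have "deriv m n h' (add_mset r R2, snd Q)" using less.IH[of h'] h(1) R2 by auto
        then show "deriv m n h' P" using Q R2 by (cases Q) auto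
      qed
      from deriv.ruleR[OF Ps0(2) this] show ?thesis using h(1) by simp
    qed
  qed
qed

lemma ctrF1:
  assumes m1: "1 \<le> m"
  shows "deriv m n h (R, add_mset x (add_mset x G)) \<Longrightarrow> deriv m n h (R, add_mset x G)"
proof (induction h arbitrary: R G x rule: less_induct)
  case (less h)
  from deriv_cases[OF less.prems(1)] show ?case
  proof (elim disjE exE conjE)
    fix w' p assume "(w', Atm p) \<in># snd (R, add_mset x (add_mset x G))"
      "(w', NAtm p) \<in># snd (R, add_mset x (add_mset x G))"
    then show ?thesis by (intro idR_gen[of w' p]) auto
  next
    fix h' Ps assume h: "h = Suc h'" "rule_PR m n Ps (R, add_mset x (add_mset x G))" "\<forall>P\<in>set Ps. deriv m n h' P"
    show ?thesis
    proof (cases "agprin m Ps R (add_mset x G) x")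
      case True
      then obtain i w a v where i: "i \<in> {1..m}" and e: "x = (w, Ag i a)"
        "Ps = [(add_mset (i,w,v) R, add_mset (v,a) (add_mset x G))]"
        "v \<notin> labels (R, add_mset x (add_mset x G))"
        unfolding agprin_def by auto
      have d0: "deriv m n h' (add_mset (i,w,v) R, add_mset (w, Ag i a) (add_mset (v,a) G))"
        using h(3) e by (auto simp: add_mset_commute)
      obtain v2 where v2: "v2 \<notin> labels (add_mset (i,w,v) R, add_mset (w, Ag i a) (add_mset (v,a) G))"
        using ex_new_if_finite[OF infinite_UNIV_nat finite_labels] by blast
      have d1: "deriv m n h' (add_mset (i,w,v2) (add_mset (i,w,v) R), add_mset (v2,a) (add_mset (v,a) G))"
        by (rule ag_inv[OF m1 d0 v2])
      define f where "f = id(v2 := v)"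
      have fR: "mapR f R = R" using v2 labels_sub(1)[of R G]
        by (intro mapR_id_on) (auto simp: f_def)
      have fG: "mapG f G = G" using v2 labels_sub(2)[of G R]
        by (intro mapG_id_on) (auto simp: f_def)
      have "w \<noteq> v2" "v \<noteq> v2" using v2 by auto
      then have "deriv m n h' (add_mset (i,w,v) (add_mset (i,w,v) R), add_mset (v,a) (add_mset (v,a) G))"
        using deriv_map[OF m1 d1, of f "{#}" "{#}"] fR fG by (simp add: f_def)
      then have "deriv m n h' (add_mset (i,w,v) R, add_mset (v,a) (add_mset (v,a) G))"
        by (rule ctrR1[OF m1])
      then have d2: "deriv m n h' (add_mset (i,w,v) R, add_mset (v,a) G)"
        using less.IH[of h'] h(1) by auto
      have "v \<notin> labels (R, add_mset (w, Ag i a) G)" using e(3) e(1) by auto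
      then have "rule_PR m n [(add_mset (i,w,v) R, add_mset (v,a) G)] (R, add_mset (w, Ag i a) G)"
        unfolding rule_PR_def using g3_rule.agR[OF i, of v R w a G n] by simp
      from deriv.ruleR[OF this] d2 show ?thesis using h(1) e(1) by simp
    next
      case False
      have dok: "del_ok m Ps R (add_mset x G) {#} {#x#}" using False by (simp add: del_ok_def)
      have fr: "\<forall>P\<in>set Ps. \<forall>y\<in>labels P - labels (R + {#}, add_mset x G + {#x#}).
           id y \<notin> labels (mapR id R + {#}, mapG id (add_mset x G) + {#})"
        by (auto simp: labels_def)
      have "rule_PR m n Ps (R + {#}, add_mset x G + {#x#})" using h(2) by simp
      from rule_gen[OF m1 this dok fr]
      obtain Ps0 where Ps0: "Ps = map (\<lambda>P. (fst P + {#}, snd P + {#x#})) Ps0"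
        "rule_PR m n (map (\<lambda>P. (mapR id (fst P) + {#}, mapG id (snd P) + {#})) Ps0)
            (mapR id R + {#}, mapG id (add_mset x G) + {#})"
        by blast
      have "\<forall>P\<in>set (map (\<lambda>P. (mapR id (fst P) + {#}, mapG id (snd P) + {#})) Ps0). deriv m n h' P"
      proof
        fix P assume "P \<in> set (map (\<lambda>P. (mapR id (fst P) + {#}, mapG id (snd P) + {#})) Ps0)"
        then obtain Q where Q: "Q \<in> set Ps0" "P = Q" by auto
        have QP: "(fst Q, add_mset x (snd Q)) \<in> set Ps" using Q(1) Ps0(1) by auto
        have "x \<in># snd Q"
        proof -
          from persist[OF h(2) QP] have
            "(\<exists>i w a v G0. add_mset x (add_mset x G) = add_mset (w, Ag i a) G0 \<and> i \<in> {1..m} \<and>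
              Ps = [(add_mset (i,w,v) R, add_mset (v,a) G0)] \<and> v \<notin> labels (R, add_mset x (add_mset x G)))
             \<or> add_mset x (add_mset x G) \<subseteq># add_mset x (snd Q)" by simp
          then show ?thesis
          proof (elim disjE exE conjE)
            assume "add_mset x (add_mset x G) \<subseteq># add_mset x (snd Q)"
            then have "add_mset x G \<subseteq># snd Q" by simp
            then show ?thesis using mset_subset_eqD by fastforce
          next
            fix i w a v G0 assume a: "add_mset x (add_mset x G) = add_mset (w, Ag i a) G0" "i \<in> {1..m}"
              "Ps = [(add_mset (i,w,v) R, add_mset (v,a) G0)]" "v \<notin> labels (R, add_mset x (add_mset x G))"
            show ?thesis
            proof (cases "x = (w, Ag i a)")
              case True
              then have "G0 = add_mset x G" using a(1) by simp
              then have "agprin m Ps R (add_mset x G) x" unfolding agprin_def using a True by auto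
              then show ?thesis using False by simp
            next
              case xne: False
              then have "count G0 x \<ge> 2" using arg_cong[OF a(1), of "\<lambda>M. count M x"] by simp
              moreover have "(fst Q, add_mset x (snd Q)) = (add_mset (i,w,v) R, add_mset (v,a) G0)"
                using QP a(3) by simp
              ultimately have c2: "count G0 x \<ge> 2" "add_mset x (snd Q) = add_mset (v,a) G0" by simp_all
              have "count G0 x \<le> count (add_mset (v,a) G0) x" by simp
              then have "count (add_mset (v,a) G0) x \<ge> 2" using c2(1) by linarith
              then have "count (add_mset x (snd Q)) x \<ge> 2" by (subst c2(2))
              then show ?thesis by (simp add: Suc_le_eq)
            qed
          qed
        qed
        then obtain G2 where G2: "snd Q = add_mset x G2" by (metis multi_member_split)
        have "deriv m n h' (fst Q, add_mset x (snd Q))" using QP h(3) by auto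
        then have "deriv m n h' (fst Q, add_mset x G2)" using less.IH[of h'] h(1) G2 by auto
        then show "deriv m n h' P" using Q G2 by (cases Q) auto
      qed
      from deriv.ruleR[OF Ps0(2) this] show ?thesis using h(1) by simp
    qed
  qed
qed



lemma all_deriv_list: "\<forall>P\<in>set Ps. \<exists>h. deriv m n h P \<Longrightarrow> \<exists>H. \<forall>P\<in>set Ps. deriv m n H P"
proof (induction Ps)
  case Nil then show ?case by simp
next
  case (Cons P Ps)
  then obtain H h where "\<forall>P\<in>set Ps. deriv m n H P" "deriv m n h P" by auto
  then have "\<forall>Q\<in>set (P # Ps). deriv m n (max H h) Q"
    using deriv_mono by (metis max.cobounded1 max.cobounded2 set_ConsD)
  then show ?case by blast
qed

lemma by_rule: "rule_PR m n Ps C \<Longrightarrow> \<forall>P\<in>set Ps. \<exists>h. deriv m n h P \<Longrightarrow> \<exists>h. deriv m n h C"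
  using all_deriv_list deriv.ruleR by blast

lemma fresh_ex: "\<exists>v. v \<notin> labels S"
  using ex_new_if_finite[OF infinite_UNIV_nat finite_labels] by blast

lemma ident:
  "agents \<phi> \<subseteq> {1..m} \<Longrightarrow> \<exists>h. deriv m n h (R, add_mset (w, \<phi>) (add_mset (w, neg \<phi>) G))"
proof (induction \<phi> arbitrary: R G w)
  case (Atm p)
  then show ?case using deriv.idR by auto
next
  case (NAtm p)
  then show ?case using idR_gen[of w p] by auto
next
  case (Conj a b)
  let ?X = "add_mset (w, Disj (neg a) (neg b)) (add_mset (w, neg a) (add_mset (w, neg b) G))"
  have r1: "rule_PR m n [(R, add_mset (w, Disj (neg a) (neg b)) (add_mset (w, neg a) (add_mset (w, neg b) (add_mset (w, Conj a b) G))))]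
             (R, add_mset (w, Disj (neg a) (neg b)) (add_mset (w, Conj a b) G))"
    unfolding rule_PR_def by (rule disjI1, rule g3_rule.disjR)
  have r2: "rule_PR m n [(R, add_mset (w, Conj a b) (add_mset (w, a) ?X)), (R, add_mset (w, Conj a b) (add_mset (w, b) ?X))]
             (R, add_mset (w, Conj a b) ?X)"
    unfolding rule_PR_def by (rule disjI1, rule g3_rule.conjR)
  have "\<exists>h. deriv m n h (R, add_mset (w, a) (add_mset (w, neg a) (add_mset (w, Conj a b) (add_mset (w, Disj (neg a) (neg b)) (add_mset (w, neg b) G)))))"
    using Conj by auto
  moreover have "\<exists>h. deriv m n h (R, add_mset (w, b) (add_mset (w, neg b) (add_mset (w, Conj a b) (add_mset (w, Disj (neg a) (neg b)) (add_mset (w, neg a) G)))))"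
    using Conj by auto
  ultimately have "\<exists>h. deriv m n h (R, add_mset (w, Conj a b) ?X)"
    using by_rule[OF r2] by (auto simp: add_mset_commute)
  then have "\<exists>h. deriv m n h (R, add_mset (w, Disj (neg a) (neg b)) (add_mset (w, Conj a b) G))"
    using by_rule[OF r1] by (auto simp: add_mset_commute)
  then show ?case by (simp add: add_mset_commute)
next
  case (Disj a b)
  let ?X = "add_mset (w, Disj a b) (add_mset (w, a) (add_mset (w, b) G))"
  have r1: "rule_PR m n [(R, add_mset (w, Disj a b) (add_mset (w, a) (add_mset (w, b) (add_mset (w, Conj (neg a) (neg b)) G))))]
             (R, add_mset (w, Disj a b) (add_mset (w, Conj (neg a) (neg b)) G))"
    unfolding rule_PR_def by (rule disjI1, rule g3_rule.disjR)
  have r2: "rule_PR m n [(R, add_mset (w, Conj (neg a) (neg b)) (add_mset (w, neg a) ?X)), (R, add_mset (w, Conj (neg a) (neg b)) (add_mset (w, neg b) ?X))]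
             (R, add_mset (w, Conj (neg a) (neg b)) ?X)"
    unfolding rule_PR_def by (rule disjI1, rule g3_rule.conjR)
  have "\<exists>h. deriv m n h (R, add_mset (w, a) (add_mset (w, neg a) (add_mset (w, Conj (neg a) (neg b)) (add_mset (w, Disj a b) (add_mset (w, b) G)))))"
    using Disj by auto
  moreover have "\<exists>h. deriv m n h (R, add_mset (w, b) (add_mset (w, neg b) (add_mset (w, Conj (neg a) (neg b)) (add_mset (w, Disj a b) (add_mset (w, a) G)))))"
    using Disj by auto
  ultimately have "\<exists>h. deriv m n h (R, add_mset (w, Conj (neg a) (neg b)) ?X)"
    using by_rule[OF r2] by (auto simp: add_mset_commute)
  then have "\<exists>h. deriv m n h (R, add_mset (w, Disj a b) (add_mset (w, Conj (neg a) (neg b)) G))"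
    using by_rule[OF r1] by (auto simp: add_mset_commute)
  then show ?case by (simp add: add_mset_commute)
next
  case (Bx a)
  obtain v where v: "v \<notin> labels (R, add_mset (w, Bx a) (add_mset (w, Dm (neg a)) G))" using fresh_ex by blast
  have r1: "rule_PR m n [(R, add_mset (w, Bx a) (add_mset (v, a) (add_mset (w, Dm (neg a)) G)))]
             (R, add_mset (w, Bx a) (add_mset (w, Dm (neg a)) G))"
    unfolding rule_PR_def using v by (intro disjI1 g3_rule.boxR)
  have r2: "rule_PR m n [(R, add_mset (w, Dm (neg a)) (add_mset (v, neg a) (add_mset (w, Bx a) (add_mset (v, a) G))))]
             (R, add_mset (w, Dm (neg a)) (add_mset (w, Bx a) (add_mset (v, a) G)))"
    unfolding rule_PR_def by (rule disjI1, rule g3_rule.diaR)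
  have "\<exists>h. deriv m n h (R, add_mset (v, a) (add_mset (v, neg a) (add_mset (w, Dm (neg a)) (add_mset (w, Bx a) G))))"
    using Bx by auto
  then have "\<exists>h. deriv m n h (R, add_mset (w, Dm (neg a)) (add_mset (w, Bx a) (add_mset (v, a) G)))"
    using by_rule[OF r2] by (auto simp: add_mset_commute)
  then show ?case using by_rule[OF r1] by (auto simp: add_mset_commute)
next
  case (Dm a)
  obtain v where v: "v \<notin> labels (R, add_mset (w, Bx (neg a)) (add_mset (w, Dm a) G))" using fresh_ex by blast
  have r1: "rule_PR m n [(R, add_mset (w, Bx (neg a)) (add_mset (v, neg a) (add_mset (w, Dm a) G)))]
             (R, add_mset (w, Bx (neg a)) (add_mset (w, Dm a) G))"
    unfolding rule_PR_def using v by (intro disjI1 g3_rule.boxR)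
  have r2: "rule_PR m n [(R, add_mset (w, Dm a) (add_mset (v, a) (add_mset (w, Bx (neg a)) (add_mset (v, neg a) G))))]
             (R, add_mset (w, Dm a) (add_mset (w, Bx (neg a)) (add_mset (v, neg a) G)))"
    unfolding rule_PR_def by (rule disjI1, rule g3_rule.diaR)
  have "\<exists>h. deriv m n h (R, add_mset (v, a) (add_mset (v, neg a) (add_mset (w, Dm a) (add_mset (w, Bx (neg a)) G))))"
    using Dm by auto
  then have "\<exists>h. deriv m n h (R, add_mset (w, Dm a) (add_mset (w, Bx (neg a)) (add_mset (v, neg a) G)))"
    using by_rule[OF r2] by (auto simp: add_mset_commute)
  then have "\<exists>h. deriv m n h (R, add_mset (w, Bx (neg a)) (add_mset (w, Dm a) G))"
    using by_rule[OF r1] by (auto simp: add_mset_commute)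
  then show ?case by (simp add: add_mset_commute)
next
  case (Ag i a)
  have i: "i \<in> {1..m}" using Ag.prems by auto
  obtain v where v: "v \<notin> labels (R, add_mset (w, Ag i a) (add_mset (w, DAg i (neg a)) G))" using fresh_ex by blast
  have r1: "rule_PR m n [(add_mset (i, w, v) R, add_mset (v, a) (add_mset (w, DAg i (neg a)) G))]
             (R, add_mset (w, Ag i a) (add_mset (w, DAg i (neg a)) G))"
    unfolding rule_PR_def using i v by (intro disjI1 g3_rule.agR)
  have r2: "rule_PR m n [(add_mset (i, w, v) R, add_mset (w, DAg i (neg a)) (add_mset (v, neg a) (add_mset (v, a) G)))]
             (add_mset (i, w, v) R, add_mset (w, DAg i (neg a)) (add_mset (v, a) G))"
    unfolding rule_PR_def using i by (intro disjI1 g3_rule.dagR)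
  have "\<exists>h. deriv m n h (add_mset (i, w, v) R, add_mset (v, a) (add_mset (v, neg a) (add_mset (w, DAg i (neg a)) G)))"
    using Ag by auto
  then have "\<exists>h. deriv m n h (add_mset (i, w, v) R, add_mset (w, DAg i (neg a)) (add_mset (v, a) G))"
    using by_rule[OF r2] by (auto simp: add_mset_commute)
  then show ?case using by_rule[OF r1] by (auto simp: add_mset_commute)
next
  case (DAg i a)
  have i: "i \<in> {1..m}" using DAg.prems by auto
  obtain v where v: "v \<notin> labels (R, add_mset (w, Ag i (neg a)) (add_mset (w, DAg i a) G))" using fresh_ex by blast
  have r1: "rule_PR m n [(add_mset (i, w, v) R, add_mset (v, neg a) (add_mset (w, DAg i a) G))]
             (R, add_mset (w, Ag i (neg a)) (add_mset (w, DAg i a) G))"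
    unfolding rule_PR_def using i v by (intro disjI1 g3_rule.agR)
  have r2: "rule_PR m n [(add_mset (i, w, v) R, add_mset (w, DAg i a) (add_mset (v, a) (add_mset (v, neg a) G)))]
             (add_mset (i, w, v) R, add_mset (w, DAg i a) (add_mset (v, neg a) G))"
    unfolding rule_PR_def using i by (intro disjI1 g3_rule.dagR)
  have "\<exists>h. deriv m n h (add_mset (i, w, v) R, add_mset (v, a) (add_mset (v, neg a) (add_mset (w, DAg i a) G)))"
    using DAg by auto
  then have "\<exists>h. deriv m n h (add_mset (i, w, v) R, add_mset (w, DAg i a) (add_mset (v, neg a) G))"
    using by_rule[OF r2] by (auto simp: add_mset_commute)
  then have "\<exists>h. deriv m n h (R, add_mset (w, Ag i (neg a)) (add_mset (w, DAg i a) G))"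
    using by_rule[OF r1] by (auto simp: add_mset_commute)
  then show ?case by (simp add: add_mset_commute)
qed

lemma ctrR_gen:
  assumes m1: "1 \<le> m"
  shows "deriv m n h (R + R' + R', G) \<Longrightarrow> deriv m n h (R + R', G)"
proof (induction R' arbitrary: R)
  case empty then show ?case by simp
next
  case (add r R')
  have "deriv m n h (add_mset r (add_mset r (R + R' + R')), G)" using add.prems by simp
  then have "deriv m n h (add_mset r (R + R' + R'), G)" by (rule ctrR1[OF m1])
  then have "deriv m n h (add_mset r R + R' + R', G)" by simp
  then have "deriv m n h (add_mset r R + R', G)" by (rule add.IH)
  then show ?case by simp
qed

lemma ctrF_gen:
  assumes m1: "1 \<le> m"
  shows "deriv m n h (R, G' + G' + G) \<Longrightarrow> deriv m n h (R, G' + G)"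
proof (induction G' arbitrary: G)
  case empty then show ?case by simp
next
  case (add x G')
  have "deriv m n h (R, add_mset x (add_mset x (G' + G' + G)))" using add.prems by simp
  then have "deriv m n h (R, add_mset x (G' + G' + G))" by (rule ctrF1[OF m1])
  then have "deriv m n h (R, G' + G' + add_mset x G)" by simp
  then have "deriv m n h (R, G' + add_mset x G)" by (rule add.IH)
  then show ?case by simp
qed

lemma subst_eq: "subst_seq y x S = (mapR (lsub y x) (fst S) + {#}, mapG (lsub y x) (snd S) + {#})"
  by (simp add: subst_seq_def mapR_def mapG_def)

theorem lemma1:
  fixes m n :: nat
  assumes "1 \<le> m"
  shows
    "(\<forall>R G w \<phi>. wf_seq m (R, add_mset (w, \<phi>) (add_mset (w, neg \<phi>) G)) \<longrightarrow>
        (\<exists>h. deriv m n h (R, add_mset (w, \<phi>) (add_mset (w, neg \<phi>) G))))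
   \<and> (\<forall>h S x y. wf_seq m S \<longrightarrow> deriv m n h S \<longrightarrow> deriv m n h (subst_seq y x S))
   \<and> (\<forall>h Ps C. rule_PR m n Ps C \<longrightarrow> wf_seq m C \<longrightarrow> deriv m n h C \<longrightarrow>
        (\<forall>P \<in> set Ps. deriv m n h P))
   \<and> (\<forall>h R R' G G'. wf_seq m (R + R', G' + G) \<longrightarrow>
        deriv m n h (R, G) \<longrightarrow> deriv m n h (R + R', G' + G))
   \<and> (\<forall>h R R' G. wf_seq m (R + R' + R', G) \<longrightarrow>
        deriv m n h (R + R' + R', G) \<longrightarrow> deriv m n h (R + R', G))
   \<and> (\<forall>h R G G'. wf_seq m (R, G' + G' + G) \<longrightarrow>
        deriv m n h (R, G' + G' + G) \<longrightarrow> deriv m n h (R, G' + G))"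
proof (intro conjI allI impI ballI)
  fix R G w \<phi>
  assume "wf_seq m (R, add_mset (w, \<phi>) (add_mset (w, neg \<phi>) G))"
  then have "agents \<phi> \<subseteq> {1..m}" unfolding wf_seq_def by auto
  then show "\<exists>h. deriv m n h (R, add_mset (w, \<phi>) (add_mset (w, neg \<phi>) G))" by (rule ident)
next
  fix h S x y assume "deriv m n h S"
  then show "deriv m n h (subst_seq y x S)" unfolding subst_eq by (rule deriv_map[OF assms])
next
  fix h Ps C P assume r: "rule_PR m n Ps C" and d: "deriv m n h C" and P: "P \<in> set Ps"
  have ps: "fst C \<subseteq># fst P" "(\<exists>i w a v G0. snd C = add_mset (w, Ag i a) G0 \<and> i \<in> {1..m} \<and>
      Ps = [(add_mset (i,w,v) (fst C), add_mset (v,a) G0)] \<and> v \<notin> labels C) \<or> snd C \<subseteq># snd P"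
    using persist[OF r P] by auto
  show "deriv m n h P"
  proof (cases "snd C \<subseteq># snd P")
    case True
    have "deriv m n h (fst C + (fst P - fst C), snd C + (snd P - snd C))"
      using deriv_wk[OF assms, of n h "fst C" "snd C"] d by simp
    then show ?thesis using ps(1) True by (simp add: subset_mset.add_diff_inverse)
  next
    case False
    then obtain i w a v G0 where "snd C = add_mset (w, Ag i a) G0" "i \<in> {1..m}"
      "Ps = [(add_mset (i, w, v) (fst C), add_mset (v, a) G0)]" "v \<notin> labels C"
      using ps(2) by blast
    then show ?thesis using ag_inv[OF assms, of n h "fst C" w i a G0 v] d P by (cases C) auto
  qed
next
  fix h R R' G G' assume "deriv m n h (R, G)"
  then have "deriv m n h (R + R', G + G')" using deriv_wk[OF assms] by blast
  then show "deriv m n h (R + R', G' + G)" by (simp add: add.commute)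
next
  fix h R R' G assume "deriv m n h (R + R' + R', G)"
  then show "deriv m n h (R + R', G)" by (rule ctrR_gen[OF assms])
next
  fix h R G G' assume "deriv m n h (R, G' + G' + G)"
  then show "deriv m n h (R, G' + G)" by (rule ctrF_gen[OF assms])
qed

end
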